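(* For every integer $n\geq 4$ there exist connected graphs $G$ and $H$ on $n$ vertices such that $\psi(G)=\psi(H)$ but $G$ and $H$ are not isomorphic.
   Context: All graphs are finite, simple and nonempty. For a graph $G$ and a positive integer $k$, a $k$-path vertex cover ($k$-PVC) of $G$ is a set $S$ of vertices such that every path on $k$ vertices in $G$ contains at least one vertex of $S$ (if $G$ has no path on $k$ vertices, the empty set is a $k$-PVC). $\psi_k(G)$ denotes the minimum cardinality of a $k$-PVC of $G$. For a graph $G$ on $n$ vertices, the path sequence of $G$ is $\psi(G)=(\psi_1(G),\psi_2(G),\ldots,\psi_n(G))$. *)

theory Defs
  imports Main
begin

definition simple_graph :: "nat \<Rightarrow> nat set set \<Rightarrow> bool" where
  "simple_graph n E \<longleftrightarrow> (\<forall>e\<in>E. \<exists>u v. e = {u, v} \<and> u \<noteq> v \<and> u < n \<and> v < n)"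

definition adj :: "nat set set \<Rightarrow> nat \<Rightarrow> nat \<Rightarrow> bool" where
  "adj E u v \<longleftrightarrow> {u, v} \<in> E"

definition is_path :: "nat \<Rightarrow> nat set set \<Rightarrow> nat list \<Rightarrow> bool" where
  "is_path n E p \<longleftrightarrow> p \<noteq> [] \<and> distinct p \<and> set p \<subseteq> {0..<n}
     \<and> (\<forall>i. Suc i < length p \<longrightarrow> adj E (p ! i) (p ! Suc i))"

definition connected_graph :: "nat \<Rightarrow> nat set set \<Rightarrow> bool" where
  "connected_graph n E \<longleftrightarrow> (\<forall>u<n. \<forall>v<n. \<exists>p. is_path n E p \<and> hd p = u \<and> last p = v)"

definition is_kPVC :: "nat \<Rightarrow> nat set set \<Rightarrow> nat \<Rightarrow> nat set \<Rightarrow> bool" where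
  "is_kPVC n E k S \<longleftrightarrow> S \<subseteq> {0..<n} \<and>
     (\<forall>p. is_path n E p \<and> length p = k \<longrightarrow> set p \<inter> S \<noteq> {})"

definition psi :: "nat \<Rightarrow> nat set set \<Rightarrow> nat \<Rightarrow> nat" where
  "psi n E k = (LEAST m. \<exists>S. is_kPVC n E k S \<and> card S = m)"

definition path_sequence :: "nat \<Rightarrow> nat set set \<Rightarrow> nat list" where
  "path_sequence n E = map (psi n E) [1..<Suc n]"

definition graph_iso :: "nat \<Rightarrow> nat set set \<Rightarrow> nat set set \<Rightarrow> bool" where
  "graph_iso n E F \<longleftrightarrow> (\<exists>f. bij_betw f {0..<n} {0..<n} \<and>
     (\<forall>u<n. \<forall>v<n. adj E u v \<longleftrightarrow> adj F (f u) (f v)))"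

end

theory Submission
  imports Defs
begin

fun goodl :: "nat list \<Rightarrow> bool" where
  "goodl (x#y#zs) = ({x,y} \<noteq> {0,1} \<and> {x,y} \<noteq> {2,3} \<and> goodl (y#zs))"
| "goodl _ = True"

lemma goodl_nth: "goodl xs \<Longrightarrow> Suc i < length xs \<Longrightarrow>
   {xs!i, xs!Suc i} \<noteq> {0,1} \<and> {xs!i, xs!Suc i} \<noteq> {2,3}"
proof (induction xs arbitrary: i rule: goodl.induct)
  case (1 x y zs)
  then show ?case by (cases i) auto
qed auto

lemma goodl_snoc: "goodl xs \<Longrightarrow> (y::nat) \<ge> 4 \<Longrightarrow> goodl (xs @ [y])"
proof (induction xs rule: goodl.induct)
  case (1 x y zs) then show ?case by auto
next
  case ("2_1") then show ?case by auto
next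
  case ("2_2" v)
  have "{v,y} \<noteq> {0,1} \<and> {v,y} \<noteq> {2,3}" using "2_2" by (auto simp: doubleton_eq_iff)
  then show ?case by simp
qed

lemma base4_bool:
  fixes a b c d :: bool
  defines "T \<equiv> {x::nat. (x=0\<and>a) \<or> (x=1\<and>b) \<or> (x=2\<and>c) \<or> (x=3\<and>d)}"
  assumes "T \<noteq> {0,1}" "T \<noteq> {2,3}"
  shows "goodl (filter (\<lambda>x. x \<in> T) (if 1 \<in> T \<and> 2 \<in> T then [0::nat,2,1,3] else [1,3,0,2]))"
  using assms(2,3) unfolding T_def
  by (cases a; cases b; cases c; cases d) (simp_all add: doubleton_eq_iff, (auto simp: set_eq_iff)?)

lemma base4:
  assumes "T \<subseteq> {0..<4}" "T \<noteq> {}" "T \<noteq> {0,1}" "T \<noteq> {2,3}"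
  shows "\<exists>xs. distinct xs \<and> set xs = T \<and> goodl xs"
proof -
  let ?xs = "filter (\<lambda>x. x \<in> T) (if 1 \<in> T \<and> 2 \<in> T then [0::nat,2,1,3] else [1,3,0,2])"
  have sub: "T \<subseteq> {0,1,2,3}" using assms(1) by auto
  have "set ?xs = T" using sub by auto
  moreover have "distinct ?xs" by auto
  moreover have "goodl ?xs"
  proof -
    define S where "S = {x::nat. (x=0\<and>0\<in>T) \<or> (x=1\<and>1\<in>T) \<or> (x=2\<and>2\<in>T) \<or> (x=3\<and>3\<in>T)}"
    have eq: "S = T" using sub unfolding S_def by auto
    have "goodl (filter (\<lambda>x. x \<in> S) (if 1 \<in> S \<and> 2 \<in> S then [0::nat,2,1,3] else [1,3,0,2]))"
      using base4_bool[of "0\<in>T" "1\<in>T" "2\<in>T" "3\<in>T"] assms(3,4) eq unfolding S_def by blast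
    then show ?thesis unfolding eq .
  qed
  ultimately show ?thesis by blast
qed

lemma ham: "T \<subseteq> {0..<N} \<Longrightarrow> T \<noteq> {} \<Longrightarrow> T \<noteq> {0,1} \<Longrightarrow> T \<noteq> {2,3} \<Longrightarrow>
  \<exists>xs. distinct xs \<and> set xs = T \<and> goodl xs"
proof (induction N arbitrary: T)
  case 0 thus ?case by auto
next
  case (Suc N)
  show ?case
  proof (cases "N < 4")
    case True
    then have "T \<subseteq> {0..<4}" using Suc.prems(1) by auto
    then show ?thesis using base4 Suc.prems by blast
  next
    case N4: False
    show ?thesis
    proof (cases "N \<in> T")
      case False
      then have "T \<subseteq> {0..<N}" using Suc.prems(1) by (auto simp: less_Suc_eq)
      thus ?thesis using Suc.IH Suc.prems by blast
    next
      case True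
      have T: "T = insert N (T - {N})" using True by auto
      have sub: "T - {N} \<subseteq> {0..<N}" using Suc.prems(1) by (auto simp: less_Suc_eq)
      consider "T - {N} = {}" | "T - {N} = {0,1}" | "T - {N} = {2,3}"
        | "T - {N} \<noteq> {}" "T - {N} \<noteq> {0,1}" "T - {N} \<noteq> {2,3}" by blast
      then show ?thesis
      proof cases
        case 1
        then have "T = {N}" using True by blast
        then show ?thesis by (intro exI[of _ "[N]"]) auto
      next
        case 2
        then have "T = {0,N,1}" using True by blast
        moreover have "{0,N} \<noteq> {0,1} \<and> {N,1} \<noteq> {0,1} \<and> {N,1} \<noteq> {2,3} \<and> {0,N} \<noteq> {2,3}"
          using N4 by (auto simp: doubleton_eq_iff)
        ultimately show ?thesis using N4 by (intro exI[of _ "[0,N,1]"]) auto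
      next
        case 3
        then have "T = {2,N,3}" using True by blast
        moreover have "{2,N} \<noteq> {0,1} \<and> {N,3} \<noteq> {0,1} \<and> {N,3} \<noteq> {2,3} \<and> {2,N} \<noteq> {2,3}"
          using N4 by (auto simp: doubleton_eq_iff)
        ultimately show ?thesis using N4 by (intro exI[of _ "[2,N,3]"]) auto
      next
        case 4
        then obtain xs where xs: "distinct xs" "set xs = T - {N}" "goodl xs"
          using Suc.IH[OF sub] by blast
        have "distinct (xs @ [N])" using xs by auto
        moreover have "set (xs @ [N]) = T" using xs T by auto
        moreover have "goodl (xs @ [N])" using goodl_snoc xs(3) N4 by simp
        ultimately show ?thesis by blast
      qed
    qed
  qed
qed

definition Kb :: "nat \<Rightarrow> nat set set \<Rightarrow> nat set set" where
  "Kb n B = {{u,v} | u v. u<n \<and> v<n \<and> u\<noteq>v \<and> {u,v} \<notin> B}"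

lemma adj_Kb: "adj (Kb n B) u v \<longleftrightarrow> u<n \<and> v<n \<and> u\<noteq>v \<and> {u,v} \<notin> B"
  unfolding adj_def Kb_def
proof
  assume "{u,v} \<in> {{a,b} | a b. a<(n::nat) \<and> b<n \<and> a\<noteq>b \<and> {a,b} \<notin> B}"
  then obtain a b where ab: "{u,v} = {a,b}" "a<n" "b<n" "a\<noteq>b" "{a,b} \<notin> B" by blast
  from ab(1) have "(u=a\<and>v=b) \<or> (u=b\<and>v=a)" by (simp add: doubleton_eq_iff)
  then show "u<n \<and> v<n \<and> u\<noteq>v \<and> {u,v} \<notin> B" using ab by auto
qed blast

lemma simple_Kb: "simple_graph n (Kb n B)"
  unfolding simple_graph_def Kb_def by auto

fun chainadj :: "nat set set \<Rightarrow> nat list \<Rightarrow> bool" where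
  "chainadj E (x#y#zs) = (adj E x y \<and> chainadj E (y#zs))"
| "chainadj E _ = True"

lemma chainadj_nth: "chainadj E xs \<Longrightarrow> Suc i < length xs \<Longrightarrow> adj E (xs!i) (xs!Suc i)"
proof (induction E xs arbitrary: i rule: chainadj.induct)
  case (1 E x y zs)
  then show ?case by (cases i) auto
qed auto

lemma is_pathI: "p \<noteq> [] \<Longrightarrow> distinct p \<Longrightarrow> set p \<subseteq> {0..<n} \<Longrightarrow> chainadj E p \<Longrightarrow> is_path n E p"
  unfolding is_path_def using chainadj_nth by blast

lemma conn_Kb:
  assumes "n \<ge> 4" "B \<subseteq> {{0,1},{2,3}}"
  shows "connected_graph n (Kb n B)"
  unfolding connected_graph_def
proof (intro allI impI)
  fix u v assume u: "u < n" and v: "v < n"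
  show "\<exists>p. is_path n (Kb n B) p \<and> hd p = u \<and> last p = v"
  proof (cases "u = v")
    case True
    then show ?thesis using u by (intro exI[of _ "[u]"]) (auto intro!: is_pathI)
  next
    case neq: False
    show ?thesis
    proof (cases "{u,v} \<in> B")
      case False
      then show ?thesis using u v neq
        by (intro exI[of _ "[u,v]"]) (auto intro!: is_pathI simp: adj_Kb)
    next
      case True
      define w where "w = (if u \<in> {0,1} then 2 else (0::nat))"
      have nb: "\<And>X. X \<notin> {{0,1},{2,3}} \<Longrightarrow> X \<notin> B" using assms(2) by (meson subsetD)
      have "{u,v} \<in> {{0,1},{2,3}}" using assms(2) True by (rule subsetD)
      then have "{u,v} = {0,1} \<or> {u,v} = {2,3}" by (simp only: insert_iff empty_iff simp_thms)
      then have "(u=0\<and>v=1) \<or> (u=1\<and>v=0) \<or> (u=2\<and>v=3) \<or> (u=3\<and>v=2)" by (simp add: doubleton_eq_iff)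
      then have w: "w < n" "w \<noteq> u" "w \<noteq> v" "{u,w} \<notin> B" "{w,v} \<notin> B"
        using assms(1) unfolding w_def by (elim disjE; simp add: nb doubleton_eq_iff)+
      show ?thesis using u v w neq
        by (intro exI[of _ "[u,w,v]"]) (auto intro!: is_pathI simp: adj_Kb)
    qed
  qed
qed

lemma psi_Kb:
  assumes n4: "n \<ge> 4" and B1: "{0,1} \<in> B" and B2: "B \<subseteq> {{0,1},{2,3}}"
    and k: "1 \<le> k" "k \<le> n"
  shows "psi n (Kb n B) k = (if k = 2 then n - 2 else n - k + 1)"
  unfolding psi_def
proof (rule Least_equality)
  let ?c = "(if k = 2 then n - 2 else n - k + 1)"
  have nb: "\<And>X. X \<notin> {{0,1},{2,3}} \<Longrightarrow> X \<notin> B" using B2 by (meson subsetD)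
  define S where "S = (if k = 2 then {2..<n} else {k-1..<n})"
  have cS: "card S = ?c" unfolding S_def using k by auto
  have "is_kPVC n (Kb n B) k S"
    unfolding is_kPVC_def
  proof (intro conjI allI impI)
    show "S \<subseteq> {0..<n}" unfolding S_def by auto
    fix p assume p: "is_path n (Kb n B) p \<and> length p = k"
    show "set p \<inter> S \<noteq> {}"
    proof
      assume dis: "set p \<inter> S = {}"
      have pd: "distinct p" "set p \<subseteq> {0..<n}" using p unfolding is_path_def by auto
      show False
      proof (cases "k = 2")
        case True
        have sp: "set p \<subseteq> {0,1}"
        proof
          fix x assume "x \<in> set p"
          then have "x < n" "x \<notin> {2..<n}" using dis pd(2) True unfolding S_def by auto
          then show "x \<in> {0,1}" by auto
        qed
        have "adj (Kb n B) (p!0) (p!1)" using p True unfolding is_path_def by auto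
        then have ne: "p!0 \<noteq> p!1" and nin: "{p!0, p!1} \<notin> B" by (auto simp: adj_Kb)
        have "p!0 \<in> set p" "p!1 \<in> set p" using p True by simp_all
        then have "p!0 \<in> {0,1}" "p!1 \<in> {0,1}" using sp by blast+
        then have "{p!0, p!1} = {0,1}" using ne by auto
        then show False using nin B1 by simp
      next
        case False
        have "set p \<subseteq> {0..<k-1}"
        proof
          fix x assume "x \<in> set p"
          then have "x < n" "x \<notin> {k-1..<n}" using dis pd(2) False unfolding S_def by auto
          then show "x \<in> {0..<k-1}" by auto
        qed
        then have "card (set p) \<le> k - 1" using card_mono[of "{0..<k-1}"] by fastforce
        moreover have "card (set p) = k" using pd(1) p distinct_card by metis
        ultimately show False using k by simp
      qed
    qed
  qed
  then show "\<exists>S. is_kPVC n (Kb n B) k S \<and> card S = ?c" using cS by blast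
next
  fix m assume "\<exists>S. is_kPVC n (Kb n B) k S \<and> card S = m"
  then obtain S where S: "is_kPVC n (Kb n B) k S" "card S = m" by blast
  have nb: "\<And>X. X \<notin> {{0,1},{2,3}} \<Longrightarrow> X \<notin> B" using B2 by (meson subsetD)
  let ?c = "(if k = 2 then n - 2 else n - k + 1)"
  show "?c \<le> m"
  proof (rule ccontr)
    assume "\<not> ?c \<le> m"
    then have lt: "card S < ?c" using S by simp
    have Ssub: "S \<subseteq> {0..<n}" using S unfolding is_kPVC_def by auto
    define T where "T = {0..<n} - S"
    have cT: "card T = n - card S" unfolding T_def using Ssub
      by (simp add: card_Diff_subset finite_subset)
    have "\<exists>T'. T' \<subseteq> T \<and> card T' \<ge> k \<and> card T' \<noteq> 2 \<and> finite T'"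
    proof (cases "k = 2")
      case True
      then have "card T \<ge> 3" using cT lt n4 by simp
      moreover have "finite T" unfolding T_def by simp
      ultimately show ?thesis using True by (intro exI[of _ T]) auto
    next
      case False
      then have "card T \<ge> k" using cT lt k by simp
      then obtain T' where "T' \<subseteq> T" "card T' = k" "finite T'"
        using obtain_subset_with_card_n by metis
      then show ?thesis using False by blast
    qed
    then obtain T' where T': "T' \<subseteq> T" "card T' \<ge> k" "card T' \<noteq> 2" "finite T'" by blast
    have T'n: "T' \<subseteq> {0..<n}" using T' unfolding T_def by auto
    have "T' \<noteq> {}" using T' k by auto
    moreover have "T' \<noteq> {0,1}" "T' \<noteq> {2,3}" using T'(3) by auto
    ultimately obtain xs where xs: "distinct xs" "set xs = T'" "goodl xs"
      using ham[OF T'n] by blast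
    have lxs: "length xs \<ge> k" using xs T' distinct_card by metis
    define p where "p = take k xs"
    have lp: "length p = k" unfolding p_def using lxs by simp
    have dp: "distinct p" unfolding p_def using xs by simp
    have spT: "set p \<subseteq> T'" unfolding p_def using xs set_take_subset by metis
    have "is_path n (Kb n B) p"
      unfolding is_path_def
    proof (intro conjI allI impI)
      show "p \<noteq> []" using lp k by auto
      show "distinct p" by fact
      show "set p \<subseteq> {0..<n}" using spT T'n by auto
      fix i assume i: "Suc i < length p"
      have eq: "p!i = xs!i" "p!Suc i = xs!Suc i" unfolding p_def using i lp by auto
      have "Suc i < length xs" using i lp lxs by simp
      then have g: "{xs!i, xs!Suc i} \<noteq> {0,1} \<and> {xs!i, xs!Suc i} \<noteq> {2,3}"
        using goodl_nth xs(3) by blast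
      have "xs!i \<noteq> xs!Suc i" using xs(1) \<open>Suc i < length xs\<close> nth_eq_iff_index_eq by fastforce
      moreover have "xs!i \<in> T'" "xs!Suc i \<in> T'" using xs(2) \<open>Suc i < length xs\<close> by auto
      moreover have "{xs!i, xs!Suc i} \<notin> B" using g nb by simp
      ultimately show "adj (Kb n B) (p!i) (p!Suc i)" unfolding eq adj_Kb using T'n by auto
    qed
    then have "set p \<inter> S \<noteq> {}" using S(1) lp unfolding is_kPVC_def by blast
    moreover have "set p \<inter> S = {}" using spT T' unfolding T_def by auto
    ultimately show False by simp
  qed
qed

theorem mainTheorem7:
  fixes n :: nat
  assumes "n \<ge> 4"
  shows "\<exists>G H. simple_graph n G \<and> simple_graph n H \<and>
           connected_graph n G \<and> connected_graph n H \<and>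
           path_sequence n G = path_sequence n H \<and> \<not> graph_iso n G H"
proof (intro exI conjI)
  let ?G = "Kb n {{0,1}}" and ?H = "Kb n {{0,1},{2,3}}"
  show "simple_graph n ?G" "simple_graph n ?H" by (rule simple_Kb)+
  show "connected_graph n ?G" using assms by (intro conn_Kb) auto
  show "connected_graph n ?H" using assms by (intro conn_Kb) auto
  show "path_sequence n ?G = path_sequence n ?H"
    unfolding path_sequence_def
  proof (rule map_cong[OF refl])
    fix k assume "k \<in> set [1..<Suc n]"
    then have k: "1 \<le> k" "k \<le> n" by auto
    show "psi n ?G k = psi n ?H k"
      using psi_Kb[OF assms _ _ k, of "{{0,1}}"] psi_Kb[OF assms _ _ k, of "{{0,1},{2,3}}"] by simp
  qed
  show "\<not> graph_iso n ?G ?H"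
  proof
    assume "graph_iso n ?G ?H"
    then obtain f where bij: "bij_betw f {0..<n} {0..<n}"
      and iso: "\<forall>u<n. \<forall>v<n. adj ?G u v \<longleftrightarrow> adj ?H (f u) (f v)"
      unfolding graph_iso_def by blast
    have im: "f ` {0..<n} = {0..<n}" using bij by (simp add: bij_betw_def)
    have i0: "0 \<in> f ` {0..<n}" and i1: "1 \<in> f ` {0..<n}" and i2: "2 \<in> f ` {0..<n}"
      and i3: "3 \<in> f ` {0..<n}"
      unfolding im using assms by auto
    obtain a where a: "a < n" "f a = 0" using i0 by auto
    obtain b where b: "b < n" "f b = 1" using i1 by auto
    obtain c where c: "c < n" "f c = 2" using i2 by auto
    obtain d where d: "d < n" "f d = 3" using i3 by auto
    have h1: "\<not> adj ?H 0 1" "\<not> adj ?H 2 3" by (simp_all add: adj_Kb)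
    have e1: "adj ?G a b \<longleftrightarrow> adj ?H (f a) (f b)" using iso a(1) b(1) by simp
    have e2: "adj ?G c d \<longleftrightarrow> adj ?H (f c) (f d)" using iso c(1) d(1) by simp
    have n1: "\<not> adj ?G a b" using e1 h1(1) a(2) b(2) by simp
    have n2: "\<not> adj ?G c d" using e2 h1(2) c(2) d(2) by simp
    have ab: "a \<noteq> b" using a b by auto
    have cd: "c \<noteq> d" using c d by auto
    have "{a,b} \<in> {{0,1}}" using n1 a(1) b(1) ab adj_Kb[of n "{{0,1}}" a b] by metis
    moreover have "{c,d} \<in> {{0,1}}" using n2 c(1) d(1) cd adj_Kb[of n "{{0,1}}" c d] by metis
    ultimately have "{a,b} = {c,d}" by (simp only: singleton_iff)
    then have "a = c \<or> a = d" by (simp add: doubleton_eq_iff) blast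
    then show False using a c d by auto
  qed
qed

end
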